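(* Let $X$, $Y$ be FK-spaces containing $\phi$ and let $Z=X+Y$ with its inductive-limit FK-topology. Then $E(X)+E(Y)\subseteq E(Z)$ for each of $E=D_p^qS,\ D_p^qW,\ D_p^qF,\ D_p^qB$.
   Context: An FK-space is a vector subspace of the space $w$ of all complex sequences with a complete metrizable locally convex topology in which coordinate functionals are continuous; $X'$ is its continuous dual. If $X$, $Y$ have paranorms $\rho$, $s$, then $Z=X+Y$ is an FK-space with paranorm $\tau(z)=\inf\{\rho(x)+s(y): x\in X, y\in Y, x+y=z\}$. $\delta^j$ has $1$ in position $j$, $0$ elsewhere; $\phi=\operatorname{span}\{\delta^j\}$. $p(n)<q(n)$ are nonnegative integer sequences with $q(n)\to\infty$. For $x\in w$, $x^{(k)}=\sum_{j=1}^kx_j\delta^j$ and $T_n(x)=\frac{1}{q(n)-p(n)}\sum_{k=p(n)+1}^{q(n)}x^{(k)}$. For an FK-space $X\supseteq\phi$: $D_p^qS(X)=\{x\in X: T_n(x)\to x\text{ in }X\}$; $D_p^qW(X)=\{x\in X: f(T_n(x))\to f(x)\ \forall f\in X'\}$; $D_p^qF(X)=\{x\in X:\lim_n f(T_n(x))\text{ exists }\forall f\in X'\}$; $D_p^qB(X)=\{x\in X:\sup_n|f(T_n(x))|<\infty\ \forall f\in X'\}$. *)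

theory Defs
  imports "HOL-Analysis.Analysis" "HOL-Library.Function_Algebras"
begin

text \<open>Sequences in w are modelled as nat \<Rightarrow> complex; index 0 is the first coordinate.\<close>

type_synonym seq = "nat \<Rightarrow> complex"

definition smul :: "complex \<Rightarrow> seq \<Rightarrow> seq" where
  "smul c x = (\<lambda>j. c * x j)"

definition unitseq :: "nat \<Rightarrow> seq" where
  "unitseq j = (\<lambda>i. if i = j then 1 else 0)"

definition is_subspace :: "seq set \<Rightarrow> bool" where
  "is_subspace X \<longleftrightarrow> 0 \<in> X \<and> (\<forall>x\<in>X. \<forall>y\<in>X. x + y \<in> X) \<and> (\<forall>c. \<forall>x\<in>X. smul c x \<in> X)"

definition is_paranorm :: "seq set \<Rightarrow> (seq \<Rightarrow> real) \<Rightarrow> bool" where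
  "is_paranorm X \<rho> \<longleftrightarrow>
     \<rho> 0 = 0 \<and>
     (\<forall>x\<in>X. \<rho> x \<ge> 0) \<and>
     (\<forall>x\<in>X. \<rho> (- x) = \<rho> x) \<and>
     (\<forall>x\<in>X. \<forall>y\<in>X. \<rho> (x + y) \<le> \<rho> x + \<rho> y) \<and>
     (\<forall>t tt x xs. (\<forall>n. xs n \<in> X) \<longrightarrow> x \<in> X \<longrightarrow> tt \<longlonglongrightarrow> t \<longrightarrow>
         (\<lambda>n. \<rho> (xs n - x)) \<longlonglongrightarrow> 0 \<longrightarrow>
         (\<lambda>n. \<rho> (smul (tt n) (xs n) - smul t x)) \<longlonglongrightarrow> 0)"

definition pn_complete :: "seq set \<Rightarrow> (seq \<Rightarrow> real) \<Rightarrow> bool" where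
  "pn_complete X \<rho> \<longleftrightarrow>
     (\<forall>s. (\<forall>n. s n \<in> X) \<longrightarrow> (\<forall>e>0. \<exists>N. \<forall>m\<ge>N. \<forall>n\<ge>N. \<rho> (s m - s n) < e) \<longrightarrow>
          (\<exists>x\<in>X. (\<lambda>n. \<rho> (s n - x)) \<longlonglongrightarrow> 0))"

definition real_convex_set :: "seq set \<Rightarrow> bool" where
  "real_convex_set C \<longleftrightarrow>
     (\<forall>x\<in>C. \<forall>y\<in>C. \<forall>t::real. 0 \<le> t \<and> t \<le> 1 \<longrightarrow>
        (\<lambda>j. complex_of_real t * x j + complex_of_real (1 - t) * y j) \<in> C)"

definition pn_locally_convex :: "seq set \<Rightarrow> (seq \<Rightarrow> real) \<Rightarrow> bool" where
  "pn_locally_convex X \<rho> \<longleftrightarrow>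
     (\<forall>e>0. \<exists>C. C \<subseteq> {x\<in>X. \<rho> x < e} \<and> real_convex_set C \<and>
              (\<exists>d>0. {x\<in>X. \<rho> x < d} \<subseteq> C))"

definition pn_continuous :: "seq set \<Rightarrow> (seq \<Rightarrow> real) \<Rightarrow> (seq \<Rightarrow> complex) \<Rightarrow> bool" where
  "pn_continuous X \<rho> f \<longleftrightarrow>
     (\<forall>x\<in>X. \<forall>e>0. \<exists>d>0. \<forall>y\<in>X. \<rho> (y - x) < d \<longrightarrow> cmod (f y - f x) < e)"

definition FK_space :: "seq set \<Rightarrow> (seq \<Rightarrow> real) \<Rightarrow> bool" where
  "FK_space X \<rho> \<longleftrightarrow> is_subspace X \<and> is_paranorm X \<rho> \<and> pn_complete X \<rho> \<and>
     pn_locally_convex X \<rho> \<and> (\<forall>j. pn_continuous X \<rho> (\<lambda>x. x j))"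

definition contains_phi :: "seq set \<Rightarrow> bool" where
  "contains_phi X \<longleftrightarrow> (\<forall>j. unitseq j \<in> X)"

definition is_linear_on :: "seq set \<Rightarrow> (seq \<Rightarrow> complex) \<Rightarrow> bool" where
  "is_linear_on X f \<longleftrightarrow> (\<forall>x\<in>X. \<forall>y\<in>X. f (x + y) = f x + f y) \<and>
                        (\<forall>c. \<forall>x\<in>X. f (smul c x) = c * f x)"

definition cdual :: "seq set \<Rightarrow> (seq \<Rightarrow> real) \<Rightarrow> (seq \<Rightarrow> complex) set" where
  "cdual X \<rho> = {f. is_linear_on X f \<and> pn_continuous X \<rho> f}"

definition sum_space :: "seq set \<Rightarrow> seq set \<Rightarrow> seq set" where
  "sum_space X Y = {x + y | x y. x \<in> X \<and> y \<in> Y}"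

definition sum_paranorm :: "seq set \<Rightarrow> (seq \<Rightarrow> real) \<Rightarrow> seq set \<Rightarrow> (seq \<Rightarrow> real) \<Rightarrow> seq \<Rightarrow> real" where
  "sum_paranorm X \<rho> Y s z = Inf {\<rho> x + s y | x y. x \<in> X \<and> y \<in> Y \<and> x + y = z}"

text \<open>Sections x^(k) = sum_{j=1}^k x_j delta^j (0-based: coordinates 0..k-1).\<close>
definition sect :: "nat \<Rightarrow> seq \<Rightarrow> seq" where
  "sect k x = (\<lambda>j. if j < k then x j else 0)"

definition Tmean :: "(nat \<Rightarrow> nat) \<Rightarrow> (nat \<Rightarrow> nat) \<Rightarrow> nat \<Rightarrow> seq \<Rightarrow> seq" where
  "Tmean p q n x = (\<lambda>j. (\<Sum>k\<in>{p n<..q n}. sect k x j) / of_nat (q n - p n))"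

definition DS :: "(nat \<Rightarrow> nat) \<Rightarrow> (nat \<Rightarrow> nat) \<Rightarrow> seq set \<Rightarrow> (seq \<Rightarrow> real) \<Rightarrow> seq set" where
  "DS p q X \<rho> = {x\<in>X. (\<lambda>n. \<rho> (Tmean p q n x - x)) \<longlonglongrightarrow> 0}"

definition DW :: "(nat \<Rightarrow> nat) \<Rightarrow> (nat \<Rightarrow> nat) \<Rightarrow> seq set \<Rightarrow> (seq \<Rightarrow> real) \<Rightarrow> seq set" where
  "DW p q X \<rho> = {x\<in>X. \<forall>f\<in>cdual X \<rho>. (\<lambda>n. f (Tmean p q n x)) \<longlonglongrightarrow> f x}"

definition DF :: "(nat \<Rightarrow> nat) \<Rightarrow> (nat \<Rightarrow> nat) \<Rightarrow> seq set \<Rightarrow> (seq \<Rightarrow> real) \<Rightarrow> seq set" where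
  "DF p q X \<rho> = {x\<in>X. \<forall>f\<in>cdual X \<rho>. convergent (\<lambda>n. f (Tmean p q n x))}"

definition DB :: "(nat \<Rightarrow> nat) \<Rightarrow> (nat \<Rightarrow> nat) \<Rightarrow> seq set \<Rightarrow> (seq \<Rightarrow> real) \<Rightarrow> seq set" where
  "DB p q X \<rho> = {x\<in>X. \<forall>f\<in>cdual X \<rho>. \<exists>M. \<forall>n. cmod (f (Tmean p q n x)) \<le> M}"

end

theory Submission
  imports Defs
begin

lemma sub_diff: "is_subspace X \<Longrightarrow> a \<in> X \<Longrightarrow> b \<in> X \<Longrightarrow> a - b \<in> X"
proof -
  assume S: "is_subspace X" "a \<in> X" "b \<in> X"
  have e: "a - b = a + smul (-1) b" by (auto simp: smul_def fun_eq_iff)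
  have "smul (-1) b \<in> X" using S unfolding is_subspace_def by blast
  then have "a + smul (-1) b \<in> X" using S unfolding is_subspace_def by blast
  then show ?thesis by (simp only: e)
qed

lemma finite_supp_in:
  assumes "is_subspace X" "contains_phi X" "finite S"
  shows "(\<lambda>j. if j \<in> S then c j else 0) \<in> X"
  using assms(3)
proof (induction S rule: finite_induct)
  case empty
  have "(\<lambda>j::nat. if j \<in> {} then c j else 0) = 0" by (auto simp: fun_eq_iff)
  then show ?case using assms(1) unfolding is_subspace_def by simp
next
  case (insert a S)
  have "(\<lambda>j. if j \<in> insert a S then c j else 0) =
        (\<lambda>j. if j \<in> S then c j else 0) + smul (c a) (unitseq a)"
    using insert(2) by (auto simp: fun_eq_iff smul_def unitseq_def)
  moreover have "smul (c a) (unitseq a) \<in> X"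
    using assms(1,2) unfolding is_subspace_def contains_phi_def by auto
  ultimately show ?case using insert(3) assms(1) unfolding is_subspace_def by auto
qed

lemma Tmean_in:
  assumes "is_subspace X" "contains_phi X"
  shows "Tmean p q n x \<in> X"
proof -
  have "Tmean p q n x = (\<lambda>j. if j \<in> {..<q n} then Tmean p q n x j else 0)"
    by (auto simp: fun_eq_iff Tmean_def sect_def intro!: sum.neutral)
  moreover have "(\<lambda>j. if j \<in> {..<q n} then Tmean p q n x j else 0) \<in> X"
    by (rule finite_supp_in[OF assms]) simp
  ultimately show ?thesis by simp
qed

lemma sect_add: "sect k (x + y) = sect k x + sect k y"
  by (auto simp: fun_eq_iff sect_def)

lemma Tmean_add: "Tmean p q n (x + y) = Tmean p q n x + Tmean p q n y"
  by (simp add: fun_eq_iff Tmean_def sect_add sum.distrib add_divide_distrib)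

lemma tau_le:
  assumes "FK_space X \<rho>" "FK_space Y s" "a \<in> X" "b \<in> Y"
  shows "sum_paranorm X \<rho> Y s (a + b) \<le> \<rho> a + s b"
  unfolding sum_paranorm_def
proof (rule cInf_lower)
  show "\<rho> a + s b \<in> {\<rho> x + s y |x y. x \<in> X \<and> y \<in> Y \<and> x + y = a + b}" using assms by blast
  show "bdd_below {\<rho> x + s y |x y. x \<in> X \<and> y \<in> Y \<and> x + y = a + b}"
    using assms(1,2) unfolding FK_space_def is_paranorm_def
    by (intro bdd_belowI[of _ 0]) force
qed

lemma tau_nonneg:
  assumes "FK_space X \<rho>" "FK_space Y s" "a \<in> X" "b \<in> Y"
  shows "0 \<le> sum_paranorm X \<rho> Y s (a + b)"
  unfolding sum_paranorm_def
proof (rule cInf_greatest)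
  show "{\<rho> x + s y |x y. x \<in> X \<and> y \<in> Y \<and> x + y = a + b} \<noteq> {}" using assms by blast
  fix r assume "r \<in> {\<rho> x + s y |x y. x \<in> X \<and> y \<in> Y \<and> x + y = a + b}"
  then show "0 \<le> r" using assms(1,2) unfolding FK_space_def is_paranorm_def by force
qed

lemma cdual_X:
  assumes "FK_space X \<rho>" "FK_space Y s" "f \<in> cdual (sum_space X Y) (sum_paranorm X \<rho> Y s)"
  shows "f \<in> cdual X \<rho>"
proof -
  have sX: "is_subspace X" and sY: "is_subspace Y" and s0: "s 0 = 0"
    using assms(1,2) unfolding FK_space_def is_paranorm_def by auto
  have XZ: "X \<subseteq> sum_space X Y"
  proof
    fix x assume "x \<in> X"
    moreover have "x = x + 0" by simp
    moreover have "(0::seq) \<in> Y" using sY unfolding is_subspace_def by simp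
    ultimately show "x \<in> sum_space X Y" unfolding sum_space_def by blast
  qed
  have lin: "is_linear_on X f"
    using assms(3) XZ sX unfolding cdual_def is_linear_on_def is_subspace_def by blast
  have "pn_continuous X \<rho> f"
    unfolding pn_continuous_def
  proof (intro ballI allI impI)
    fix x e assume x: "x \<in> X" and e: "(e::real) > 0"
    from assms(3) x XZ e obtain d where d: "d > 0"
      "\<forall>y\<in>sum_space X Y. sum_paranorm X \<rho> Y s (y - x) < d \<longrightarrow> cmod (f y - f x) < e"
      unfolding cdual_def pn_continuous_def by blast
    show "\<exists>d>0. \<forall>y\<in>X. \<rho> (y - x) < d \<longrightarrow> cmod (f y - f x) < e"
    proof (intro exI[of _ d] conjI ballI impI)
      fix y assume y: "y \<in> X" and r: "\<rho> (y - x) < d"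
      have "y - x \<in> X" using sub_diff[OF sX y x] .
      moreover have "(0::seq) \<in> Y" using sY unfolding is_subspace_def by simp
      ultimately have "sum_paranorm X \<rho> Y s ((y - x) + 0) \<le> \<rho> (y - x) + s 0"
        using tau_le[OF assms(1,2)] by blast
      then have "sum_paranorm X \<rho> Y s (y - x) < d" using r s0 by simp
      then show "cmod (f y - f x) < e" using d y XZ by blast
    qed (use d in auto)
  qed
  with lin show ?thesis unfolding cdual_def by simp
qed

lemma cdual_Y:
  assumes "FK_space X \<rho>" "FK_space Y s" "f \<in> cdual (sum_space X Y) (sum_paranorm X \<rho> Y s)"
  shows "f \<in> cdual Y s"
proof -
  have sX: "is_subspace X" and sY: "is_subspace Y" and s0: "\<rho> 0 = 0"
    using assms(1,2) unfolding FK_space_def is_paranorm_def by auto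
  have XZ: "Y \<subseteq> sum_space X Y"
  proof
    fix x assume "x \<in> Y"
    moreover have "x = 0 + x" by simp
    moreover have "(0::seq) \<in> X" using sX unfolding is_subspace_def by simp
    ultimately show "x \<in> sum_space X Y" unfolding sum_space_def by blast
  qed
  have lin: "is_linear_on Y f"
    using assms(3) XZ sY unfolding cdual_def is_linear_on_def is_subspace_def by blast
  have "pn_continuous Y s f"
    unfolding pn_continuous_def
  proof (intro ballI allI impI)
    fix x e assume x: "x \<in> Y" and e: "(e::real) > 0"
    from assms(3) x XZ e obtain d where d: "d > 0"
      "\<forall>y\<in>sum_space X Y. sum_paranorm X \<rho> Y s (y - x) < d \<longrightarrow> cmod (f y - f x) < e"
      unfolding cdual_def pn_continuous_def by blast
    show "\<exists>d>0. \<forall>y\<in>Y. s (y - x) < d \<longrightarrow> cmod (f y - f x) < e"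
    proof (intro exI[of _ d] conjI ballI impI)
      fix y assume y: "y \<in> Y" and r: "s (y - x) < d"
      have "y - x \<in> Y" using sub_diff[OF sY y x] .
      moreover have "(0::seq) \<in> X" using sX unfolding is_subspace_def by simp
      ultimately have "sum_paranorm X \<rho> Y s (0 + (y - x)) \<le> \<rho> 0 + s (y - x)"
        using tau_le[OF assms(1,2)] by blast
      then have "sum_paranorm X \<rho> Y s (y - x) < d" using r s0 by simp
      then show "cmod (f y - f x) < e" using d y XZ by blast
    qed (use d in auto)
  qed
  with lin show ?thesis unfolding cdual_def by simp
qed

lemma lin_split:
  assumes "FK_space X \<rho>" "FK_space Y s" "contains_phi X" "contains_phi Y"
    "f \<in> cdual (sum_space X Y) (sum_paranorm X \<rho> Y s)" "x \<in> X" "y \<in> Y"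
  shows "f (Tmean p q n (x + y)) = f (Tmean p q n x) + f (Tmean p q n y)"
    and "f (x + y) = f x + f y"
proof -
  have sX: "is_subspace X" and sY: "is_subspace Y"
    using assms(1,2) unfolding FK_space_def by auto
  have XZ: "X \<subseteq> sum_space X Y"
  proof
    fix x assume "x \<in> X"
    moreover have "x = x + 0" by simp
    moreover have "(0::seq) \<in> Y" using sY unfolding is_subspace_def by simp
    ultimately show "x \<in> sum_space X Y" unfolding sum_space_def by blast
  qed
  have YZ: "Y \<subseteq> sum_space X Y"
  proof
    fix x assume "x \<in> Y"
    moreover have "x = 0 + x" by simp
    moreover have "(0::seq) \<in> X" using sX unfolding is_subspace_def by simp
    ultimately show "x \<in> sum_space X Y" unfolding sum_space_def by blast
  qed
  have L: "\<And>a b. a \<in> sum_space X Y \<Longrightarrow> b \<in> sum_space X Y \<Longrightarrow> f (a + b) = f a + f b"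
    using assms(5) unfolding cdual_def is_linear_on_def by blast
  show "f (Tmean p q n (x + y)) = f (Tmean p q n x) + f (Tmean p q n y)"
    unfolding Tmean_add
    using L Tmean_in[OF sX assms(3)] Tmean_in[OF sY assms(4)] XZ YZ by blast
  show "f (x + y) = f x + f y" using L assms(6,7) XZ YZ by blast
qed

theorem mainTheorem17:
  fixes X Y :: "seq set" and \<rho> s :: "seq \<Rightarrow> real" and p q :: "nat \<Rightarrow> nat"
  assumes "FK_space X \<rho>" and "FK_space Y s"
    and "contains_phi X" and "contains_phi Y"
    and "\<forall>n. p n < q n" and "filterlim q at_top sequentially"
  defines "Z \<equiv> sum_space X Y" and "\<tau> \<equiv> sum_paranorm X \<rho> Y s"
  shows "sum_space (DS p q X \<rho>) (DS p q Y s) \<subseteq> DS p q Z \<tau> \<and>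
     sum_space (DW p q X \<rho>) (DW p q Y s) \<subseteq> DW p q Z \<tau> \<and>
     sum_space (DF p q X \<rho>) (DF p q Y s) \<subseteq> DF p q Z \<tau> \<and>
     sum_space (DB p q X \<rho>) (DB p q Y s) \<subseteq> DB p q Z \<tau>"
proof (intro conjI subsetI)
  have sX: "is_subspace X" and sY: "is_subspace Y"
    using assms(1,2) unfolding FK_space_def by auto
  have inZ: "\<And>x y. x \<in> X \<Longrightarrow> y \<in> Y \<Longrightarrow> x + y \<in> Z" unfolding Z_def sum_space_def by blast
  {
    fix z assume "z \<in> sum_space (DS p q X \<rho>) (DS p q Y s)"
    then obtain x y where z: "z = x + y" and x: "x \<in> DS p q X \<rho>" and y: "y \<in> DS p q Y s"
      unfolding sum_space_def by blast
    have xX: "x \<in> X" and yY: "y \<in> Y" using x y unfolding DS_def by auto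
    have eq: "\<And>n. Tmean p q n z - z = (Tmean p q n x - x) + (Tmean p q n y - y)"
      by (simp add: z Tmean_add fun_eq_iff)
    have mX: "\<And>n. Tmean p q n x - x \<in> X" using sub_diff[OF sX Tmean_in[OF sX assms(3)] xX] .
    have mY: "\<And>n. Tmean p q n y - y \<in> Y" using sub_diff[OF sY Tmean_in[OF sY assms(4)] yY] .
    have up: "\<And>n. \<tau> (Tmean p q n z - z) \<le> \<rho> (Tmean p q n x - x) + s (Tmean p q n y - y)"
      unfolding eq \<tau>_def using tau_le[OF assms(1,2) mX mY] .
    have lo: "\<And>n. 0 \<le> \<tau> (Tmean p q n z - z)"
      unfolding eq \<tau>_def using tau_nonneg[OF assms(1,2) mX mY] .
    have l1: "(\<lambda>n. \<rho> (Tmean p q n x - x)) \<longlonglongrightarrow> 0" using x unfolding DS_def by blast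
    have l2: "(\<lambda>n. s (Tmean p q n y - y)) \<longlonglongrightarrow> 0" using y unfolding DS_def by blast
    have "(\<lambda>n. \<rho> (Tmean p q n x - x) + s (Tmean p q n y - y)) \<longlonglongrightarrow> 0 + 0"
      by (rule tendsto_add[OF l1 l2])
    then have lim: "(\<lambda>n. \<rho> (Tmean p q n x - x) + s (Tmean p q n y - y)) \<longlonglongrightarrow> 0" by simp
    have e1: "\<forall>\<^sub>F n in sequentially. 0 \<le> \<tau> (Tmean p q n z - z)" using lo by (intro always_eventually) blast
    have e2: "\<forall>\<^sub>F n in sequentially. \<tau> (Tmean p q n z - z) \<le> \<rho> (Tmean p q n x - x) + s (Tmean p q n y - y)"
      using up by (intro always_eventually) blast
    have "(\<lambda>n. \<tau> (Tmean p q n z - z)) \<longlonglongrightarrow> 0"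
      by (rule tendsto_sandwich[OF e1 e2 tendsto_const lim])
    then show "z \<in> DS p q Z \<tau>" unfolding DS_def using inZ[OF xX yY] z by simp
  }
  {
    fix z assume "z \<in> sum_space (DW p q X \<rho>) (DW p q Y s)"
    then obtain x y where z: "z = x + y" and x: "x \<in> DW p q X \<rho>" and y: "y \<in> DW p q Y s"
      unfolding sum_space_def by blast
    have xX: "x \<in> X" and yY: "y \<in> Y" using x y unfolding DW_def by auto
    have "\<forall>f\<in>cdual Z \<tau>. (\<lambda>n. f (Tmean p q n z)) \<longlonglongrightarrow> f z"
    proof
      fix f assume f: "f \<in> cdual Z \<tau>"
      have fX: "f \<in> cdual X \<rho>" and fY: "f \<in> cdual Y s"
        using cdual_X[OF assms(1,2)] cdual_Y[OF assms(1,2)] f unfolding Z_def \<tau>_def by auto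
      have "(\<lambda>n. f (Tmean p q n x) + f (Tmean p q n y)) \<longlonglongrightarrow> f x + f y"
        using x y fX fY unfolding DW_def by (intro tendsto_add) auto
      then show "(\<lambda>n. f (Tmean p q n z)) \<longlonglongrightarrow> f z"
        using lin_split[OF assms(1-4) f[unfolded Z_def \<tau>_def] xX yY] z by simp
    qed
    then show "z \<in> DW p q Z \<tau>" unfolding DW_def using inZ[OF xX yY] z by simp
  }
  {
    fix z assume "z \<in> sum_space (DF p q X \<rho>) (DF p q Y s)"
    then obtain x y where z: "z = x + y" and x: "x \<in> DF p q X \<rho>" and y: "y \<in> DF p q Y s"
      unfolding sum_space_def by blast
    have xX: "x \<in> X" and yY: "y \<in> Y" using x y unfolding DF_def by auto
    have "\<forall>f\<in>cdual Z \<tau>. convergent (\<lambda>n. f (Tmean p q n z))"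
    proof
      fix f assume f: "f \<in> cdual Z \<tau>"
      have fX: "f \<in> cdual X \<rho>" and fY: "f \<in> cdual Y s"
        using cdual_X[OF assms(1,2)] cdual_Y[OF assms(1,2)] f unfolding Z_def \<tau>_def by auto
      have "convergent (\<lambda>n. f (Tmean p q n x) + f (Tmean p q n y))"
        using x y fX fY unfolding DF_def by (intro convergent_add) auto
      then show "convergent (\<lambda>n. f (Tmean p q n z))"
        using lin_split[OF assms(1-4) f[unfolded Z_def \<tau>_def] xX yY] z by simp
    qed
    then show "z \<in> DF p q Z \<tau>" unfolding DF_def using inZ[OF xX yY] z by simp
  }
  {
    fix z assume "z \<in> sum_space (DB p q X \<rho>) (DB p q Y s)"
    then obtain x y where z: "z = x + y" and x: "x \<in> DB p q X \<rho>" and y: "y \<in> DB p q Y s"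
      unfolding sum_space_def by blast
    have xX: "x \<in> X" and yY: "y \<in> Y" using x y unfolding DB_def by auto
    have "\<forall>f\<in>cdual Z \<tau>. \<exists>M. \<forall>n. cmod (f (Tmean p q n z)) \<le> M"
    proof
      fix f assume f: "f \<in> cdual Z \<tau>"
      have fX: "f \<in> cdual X \<rho>" and fY: "f \<in> cdual Y s"
        using cdual_X[OF assms(1,2)] cdual_Y[OF assms(1,2)] f unfolding Z_def \<tau>_def by auto
      obtain M1 where M1: "\<forall>n. cmod (f (Tmean p q n x)) \<le> M1" using x fX unfolding DB_def by auto
      obtain M2 where M2: "\<forall>n. cmod (f (Tmean p q n y)) \<le> M2" using y fY unfolding DB_def by auto
      have "\<forall>n. cmod (f (Tmean p q n z)) \<le> M1 + M2"
      proof
        fix n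
        have "cmod (f (Tmean p q n z)) = cmod (f (Tmean p q n x) + f (Tmean p q n y))"
          using lin_split[OF assms(1-4) f[unfolded Z_def \<tau>_def] xX yY] z by simp
        also have "\<dots> \<le> cmod (f (Tmean p q n x)) + cmod (f (Tmean p q n y))" by (rule norm_triangle_ineq)
        also have "\<dots> \<le> M1 + M2" using M1 M2 by (intro add_mono) auto
        finally show "cmod (f (Tmean p q n z)) \<le> M1 + M2" .
      qed
      then show "\<exists>M. \<forall>n. cmod (f (Tmean p q n z)) \<le> M" by blast
    qed
    then show "z \<in> DB p q Z \<tau>" unfolding DB_def using inZ[OF xX yY] z by simp
  }
qed

end
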